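(* If $P$ is a simple closed $n$-gon ($n\ge3$) in $\mathbb{R}^2$, then $\mathrm{poldiam}(\mathrm{int}P)\le\lfloor n/2\rfloor+3$ and $\mathrm{poldiam}(\mathrm{ext}P)\le\lfloor n/2\rfloor+3$.
   Context: A simple closed $n$-gon is $P=\bigcup_{i=1}^n[p_{i-1},p_i]$ with distinct vertices $p_0,\dots,p_{n-1}$, $p_n=p_0$, whose edges meet only in common endpoints of consecutive edges. $\mathbb{R}^2\setminus P$ is the disjoint union of the bounded open set $\mathrm{int}P$ and the unbounded open set $\mathrm{ext}P$ (its two components). For $S\subset\mathbb{R}^2$ and $a,b\in S$, $\pi_S(a,b)$ is the smallest number of edges of a polygonal path connecting $a$ to $b$ within $S$ ($\infty$ if none exists), and $\mathrm{poldiam}(S)=\sup\{\pi_S(a,b):a,b\in S\}$. *)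

theory Defs
  imports "HOL-Analysis.Analysis" "HOL-Library.Extended_Nat"
begin

definition poly_edge :: "nat \<Rightarrow> (nat \<Rightarrow> real^2) \<Rightarrow> nat \<Rightarrow> (real^2) set" where
  "poly_edge n p i = closed_segment (p i) (p (Suc i mod n))"

definition polygon :: "nat \<Rightarrow> (nat \<Rightarrow> real^2) \<Rightarrow> (real^2) set" where
  "polygon n p = (\<Union>i<n. poly_edge n p i)"

definition simple_closed_polygon :: "nat \<Rightarrow> (nat \<Rightarrow> real^2) \<Rightarrow> bool" where
  "simple_closed_polygon n p \<longleftrightarrow>
     inj_on p {..<n} \<and>
     (\<forall>i<n. \<forall>j<n. i \<noteq> j \<longrightarrow>
        poly_edge n p i \<inter> poly_edge n p j =
          (if j = Suc i mod n then {p j}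
           else if i = Suc j mod n then {p i}
           else {}))"

definition polygonal_path_in :: "'a::real_vector set \<Rightarrow> 'a \<Rightarrow> 'a \<Rightarrow> nat \<Rightarrow> bool" where
  "polygonal_path_in S a b k \<longleftrightarrow>
     (\<exists>q::nat \<Rightarrow> 'a. q 0 = a \<and> q k = b \<and> (\<forall>i<k. closed_segment (q i) (q (Suc i)) \<subseteq> S))"

text \<open>pi_S(a,b): least number of edges, infinity if none.\<close>
definition polydist :: "'a::real_vector set \<Rightarrow> 'a \<Rightarrow> 'a \<Rightarrow> enat" where
  "polydist S a b = (INF k\<in>{k. polygonal_path_in S a b k}. enat k)"

definition poldiam :: "'a::real_vector set \<Rightarrow> enat" where
  "poldiam S = (SUP a\<in>S. SUP b\<in>S. polydist S a b)"

end

theory Submission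
  imports Defs
begin



fun pchain :: "(nat \<Rightarrow> real^2) \<Rightarrow> nat \<Rightarrow> real \<Rightarrow> real^2" where
  "pchain p 0 = linepath (p 0) (p 1)"
| "pchain p (Suc m) = pchain p m +++ linepath (p (Suc m)) (p (Suc (Suc m)))"

lemma pchain_props:
  assumes "Suc m < n" and "simple_closed_polygon n p"
  shows "arc (pchain p m) \<and> pathstart (pchain p m) = p 0 \<and> pathfinish (pchain p m) = p (Suc m)
     \<and> path_image (pchain p m) = (\<Union>i\<le>m. closed_segment (p i) (p (Suc i)))"
  using assms(1)
proof (induction m)
  case 0
  have "p 0 \<noteq> p 1" using assms(2) 0 unfolding simple_closed_polygon_def inj_on_def by auto
  then show ?case by auto
next
  case (Suc m)
  have IH: "arc (pchain p m)" "pathstart (pchain p m) = p 0" "pathfinish (pchain p m) = p (Suc m)"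
     "path_image (pchain p m) = (\<Union>i\<le>m. closed_segment (p i) (p (Suc i)))" using Suc by auto
  have ne: "p (Suc m) \<noteq> p (Suc (Suc m))"
  proof
    assume "p (Suc m) = p (Suc (Suc m))"
    moreover have "inj_on p {..<n}" using assms(2) unfolding simple_closed_polygon_def by auto
    ultimately have "Suc m = Suc (Suc m)" using Suc.prems by (auto dest: inj_onD)
    then show False by simp
  qed
  have int: "path_image (pchain p m) \<inter> closed_segment (p (Suc m)) (p (Suc (Suc m))) \<subseteq> {p (Suc m)}"
  proof -
    { fix i assume i: "i \<le> m"
      have "poly_edge n p i \<inter> poly_edge n p (Suc m) = (if Suc m = Suc i mod n then {p (Suc m)}
           else if i = Suc (Suc m) mod n then {p i} else {})"
        using assms(2) Suc.prems i unfolding simple_closed_polygon_def by auto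
      moreover have "poly_edge n p i = closed_segment (p i) (p (Suc i))" 
        "poly_edge n p (Suc m) = closed_segment (p (Suc m)) (p (Suc (Suc m)))"
        using Suc.prems i by (auto simp: poly_edge_def)
      moreover have "i \<noteq> Suc (Suc m) mod n" using Suc.prems i by auto
      ultimately have "closed_segment (p i) (p (Suc i)) \<inter> closed_segment (p (Suc m)) (p (Suc (Suc m))) \<subseteq> {p (Suc m)}"
        by (auto split: if_splits)
    }
    then show ?thesis using IH(4) by auto
  qed
  have "arc (pchain p (Suc m))" using arc_join[OF IH(1) arc_linepath[OF ne]] IH int by auto
  moreover have "path_image (pchain p (Suc m)) = (\<Union>i\<le>Suc m. closed_segment (p i) (p (Suc i)))"
    using IH by (simp add: path_image_join atMost_Suc Un_commute)
  ultimately show ?case using IH by auto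
qed

definition cfun :: "real^2 \<Rightarrow> complex" where "cfun x = Complex (x$1) (x$2)"

lemma cfun_linear: "linear cfun"
  by (rule linearI) (auto simp: cfun_def complex_eq_iff)

lemma cfun_bij: "bij cfun"
proof (rule bijI)
  show "inj cfun" by (auto simp: inj_def cfun_def vec_eq_iff forall_2)
  show "surj cfun"
  proof -
    { fix z have "cfun (vector [Re z, Im z]) = z" by (simp add: cfun_def complex_eq_iff) }
    then show ?thesis by (rule surjI)
  qed
qed

lemma polygon_disconnected:
  assumes "n \<ge> 3" and "simple_closed_polygon n p"
  shows "\<not> connected (- polygon n p)"
proof -
  define g where "g = pchain p (n - 2) +++ linepath (p (n - 1)) (p 0)"
  have n2: "Suc (n-2) = n - 1" "Suc (n - 2) < n" using assms by auto
  note C = pchain_props[OF n2(2) assms(2)]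
  have ne: "p (n - 1) \<noteq> p 0"
  proof
    assume "p (n-1) = p 0"
    moreover have "inj_on p {..<n}" using assms(2) unfolding simple_closed_polygon_def by auto
    ultimately have "n - 1 = 0" using assms by (auto dest: inj_onD)
    then show False using assms by simp
  qed
  have last: "poly_edge n p (n-1) = closed_segment (p (n - 1)) (p 0)"
    using assms by (simp add: poly_edge_def)
  have int: "path_image (pchain p (n-2)) \<inter> path_image (linepath (p (n - 1)) (p 0)) \<subseteq> {pathstart (pchain p (n-2)), pathstart (linepath (p (n - 1)) (p 0))}"
  proof -
    { fix i assume i: "i \<le> n - 2"
      have "poly_edge n p i \<inter> poly_edge n p (n-1) = (if n-1 = Suc i mod n then {p (n-1)}
           else if i = Suc (n-1) mod n then {p i} else {})"
        using assms i unfolding simple_closed_polygon_def by auto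
      moreover have "poly_edge n p i = closed_segment (p i) (p (Suc i))" 
        using assms i by (auto simp: poly_edge_def)
      moreover have "Suc (n-1) mod n = 0" using assms by auto
      ultimately have "closed_segment (p i) (p (Suc i)) \<inter> closed_segment (p (n - 1)) (p 0) \<subseteq> {p 0, p (n-1)}"
        using last by (auto split: if_splits)
    }
    then show ?thesis using C by auto
  qed
  have sg: "simple_path g" unfolding g_def
    using simple_path_join_loop[OF conjunct1[OF C] arc_linepath[OF ne]] C n2 int by auto
  have loop: "pathfinish g = pathstart g" unfolding g_def using C by auto
  have img: "path_image g = polygon n p"
  proof -
    have "path_image g = (\<Union>i\<le>n-2. closed_segment (p i) (p (Suc i))) \<union> closed_segment (p (n - 1)) (p 0)"
      unfolding g_def using C n2 by (simp add: path_image_join)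
    also have "\<dots> = (\<Union>i<n. poly_edge n p i)"
    proof -
      have "{..<n} = insert (n-1) {..n-2}" using assms by auto
      moreover have "\<And>i. i \<le> n-2 \<Longrightarrow> poly_edge n p i = closed_segment (p i) (p (Suc i))"
        using assms by (auto simp: poly_edge_def)
      ultimately show ?thesis using last by auto
    qed
    finally show ?thesis by (simp add: polygon_def)
  qed
  have sg2: "simple_path (cfun \<circ> g)"
    using simple_path_linear_image_eq[OF cfun_linear] cfun_bij sg by (auto simp: bij_def)
  have "\<not> connected (- path_image (cfun \<circ> g))"
    using Jordan_disconnected[OF sg2] loop by (simp add: pathfinish_compose pathstart_compose)
  moreover have "- path_image (cfun \<circ> g) = cfun ` (- polygon n p)"
    using img cfun_bij by (simp add: path_image_compose bij_image_Compl_eq)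
  ultimately show ?thesis using connected_linear_image[OF cfun_linear] by metis
qed




definition rot :: "real^2 \<Rightarrow> real^2" where "rot x = vector [-(x$2), x$1]"

lemma inner2: "(x::real^2) \<bullet> y = x$1 * y$1 + x$2 * y$2"
  by (simp add: inner_vec_def sum_2)

lemma rot_comp [simp]: "rot x $ 1 = - (x$2)" "rot x $ 2 = x$1"
  by (simp_all add: rot_def)

lemma rot_self [simp]: "rot x \<bullet> x = 0" "x \<bullet> rot x = 0"
  by (simp_all add: inner2)

lemma rot_skew: "rot x \<bullet> y = - (x \<bullet> rot y)"
  by (simp add: inner2)

lemma rot_add: "rot (x + y) = rot x + rot y"
  by (simp add: vec_eq_iff forall_2)
lemma rot_diff: "rot (x - y) = rot x - rot y"
  by (simp add: vec_eq_iff forall_2)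
lemma rot_scale: "rot (c *\<^sub>R x) = c *\<^sub>R rot x"
  by (simp add: vec_eq_iff forall_2)
lemma rot_minus: "rot (- x) = - rot x"
  by (simp add: vec_eq_iff forall_2)
lemma norm_rot [simp]: "norm (rot x) = norm x"
  by (simp add: norm_eq_sqrt_inner inner2 algebra_simps)
lemma rot_eq_0 [simp]: "rot x = 0 \<longleftrightarrow> x = 0"
  by (metis norm_eq_zero norm_rot)
lemma rot_inj: "rot x = rot y \<Longrightarrow> x = y"
  by (simp add: vec_eq_iff forall_2)

lemma rot_perp_parallel:
  assumes "x \<noteq> 0" "y \<bullet> rot x = 0"
  shows "y = ((y \<bullet> x) / (x \<bullet> x)) *\<^sub>R x"
proof -
  have xx: "x$1 * x$1 + x$2 * x$2 \<noteq> 0" using assms(1)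
    by (metis inner2 inner_eq_zero_iff)
  have h: "x$1 * y$2 = x$2 * y$1" using assms(2) by (simp add: inner2 algebra_simps)
  have "y$1 * (x$1 * x$1 + x$2 * x$2) = (y$1 * x$1 + y$2 * x$2) * x$1"
    using h by (simp add: algebra_simps)
  moreover have "y$2 * (x$1 * x$1 + x$2 * x$2) = (y$1 * x$1 + y$2 * x$2) * x$2"
    using h by (simp add: algebra_simps)
  ultimately show ?thesis using xx
    by (simp add: vec_eq_iff forall_2 inner2 field_simps)
qed

lemma conv_pos: "(a::real) > 0 \<Longrightarrow> b > 0 \<Longrightarrow> 0 \<le> u \<Longrightarrow> u \<le> 1 \<Longrightarrow> (1-u)*a + u*b > 0"
  by (cases "u = 0") (auto intro: add_nonneg_pos add_pos_nonneg)

locale spoly =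
  fixes n :: nat and p :: "nat \<Rightarrow> real^2"
  assumes n3: "n \<ge> 3" and spc: "simple_closed_polygon n p"
begin

definition V where "V i = p (i mod n)"
definition E where "E i = closed_segment (V i) (V (Suc i))"
definition t where "t i = V (Suc i) - V i"
definition N where "N i = rot (t i)"
abbreviation PP where "PP \<equiv> polygon n p"

lemma npos: "n > 0" using n3 by auto

lemma V_mod: "i mod n = j mod n \<Longrightarrow> V i = V j"
  by (simp add: V_def)

lemma V_plus_n [simp]: "V (i + n) = V i"
  by (simp add: V_def)

lemma Suc_mod_eq: "i mod n = j mod n \<Longrightarrow> Suc i mod n = Suc j mod n"
  by (metis mod_Suc_eq)

lemma E_mod: "i mod n = j mod n \<Longrightarrow> E i = E j"
  unfolding E_def by (metis V_mod Suc_mod_eq)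
lemma t_mod: "i mod n = j mod n \<Longrightarrow> t i = t j"
  unfolding t_def by (metis V_mod Suc_mod_eq)
lemma N_mod: "i mod n = j mod n \<Longrightarrow> N i = N j"
  unfolding N_def by (metis t_mod)

lemma E_poly_edge: "E i = poly_edge n p (i mod n)"
  unfolding E_def poly_edge_def V_def by (simp add: mod_Suc_eq)

lemma PP_eq: "PP = (\<Union>i. E i)"
proof -
  have "PP = (\<Union>i<n. E i)" unfolding polygon_def
    by (metis (no_types, lifting) E_poly_edge SUP_cong lessThan_iff mod_less)
  also have "\<dots> = (\<Union>i. E i)"
  proof
    show "(\<Union>i. E i) \<subseteq> (\<Union>i<n. E i)"
    proof
      fix x assume "x \<in> (\<Union>i. E i)"
      then obtain i where "x \<in> E i" by auto
      then have "x \<in> E (i mod n)" using E_mod[of i "i mod n"] by simp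
      moreover have "i mod n < n" using npos by simp
      ultimately show "x \<in> (\<Union>i<n. E i)" by blast
    qed
  qed auto
  finally show ?thesis .
qed

lemma V_inj: "V i = V j \<longleftrightarrow> i mod n = j mod n"
proof -
  have "inj_on p {..<n}" using spc unfolding simple_closed_polygon_def by auto
  then show ?thesis unfolding V_def using npos
    by (metis inj_on_contraD lessThan_iff mod_less_divisor)
qed

lemma E_int: "i mod n \<noteq> j mod n \<Longrightarrow> E i \<inter> E j = (if j mod n = Suc i mod n then {V j}
   else if i mod n = Suc j mod n then {V i} else {})"
proof -
  assume ij: "i mod n \<noteq> j mod n"
  have "poly_edge n p (i mod n) \<inter> poly_edge n p (j mod n) =
         (if j mod n = Suc (i mod n) mod n then {p (j mod n)}
          else if i mod n = Suc (j mod n) mod n then {p (i mod n)} else {})"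
    using spc ij npos unfolding simple_closed_polygon_def by auto
  then show ?thesis by (simp add: E_poly_edge V_def mod_Suc_eq)
qed

lemma mod_Suc_ne: "i mod n \<noteq> Suc i mod n"
  using n3 by (auto simp: mod_Suc split: if_splits)

lemma t_ne: "t i \<noteq> 0"
proof -
  have "i mod n \<noteq> Suc i mod n" by (rule mod_Suc_ne)
  then show ?thesis unfolding t_def using V_inj by auto
qed

lemma N_ne: "N i \<noteq> 0" by (simp add: N_def t_ne)

lemma edge_adj: "E i \<inter> E (Suc i) = {V (Suc i)}"
proof -
  have "i mod n \<noteq> Suc i mod n" by (rule mod_Suc_ne)
  then show ?thesis using E_int by auto
qed

lemma in_E: "x \<in> E i \<longleftrightarrow> (\<exists>u. 0 \<le> u \<and> u \<le> 1 \<and> x = V i + u *\<^sub>R t i)"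
  unfolding E_def t_def in_segment by (auto simp: algebra_simps)

lemma no_fold: "\<not> (\<exists>c>0. t (Suc i) = (-c) *\<^sub>R t i)"
proof
  assume "\<exists>c>0. t (Suc i) = (-c) *\<^sub>R t i"
  then obtain c where c: "c > 0" "t (Suc i) = (-c) *\<^sub>R t i" by auto
  show False
  proof (cases "c \<le> 1")
    case True
    have "V (Suc (Suc i)) = V (Suc i) + (-c) *\<^sub>R t i" using c by (simp add: t_def algebra_simps)
    also have "\<dots> = V i + (1 - c) *\<^sub>R t i" by (simp add: t_def algebra_simps)
    finally have eq: "V (Suc (Suc i)) = V i + (1 - c) *\<^sub>R t i" .
    have "V (Suc (Suc i)) \<in> E i" unfolding in_E using True c eq by (intro exI[of _ "1-c"]) auto
    moreover have "V (Suc (Suc i)) \<in> E (Suc i)" by (simp add: E_def)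
    ultimately have "V (Suc (Suc i)) = V (Suc i)" using edge_adj by blast
    then show False using t_ne[of "Suc i"] by (simp add: t_def)
  next
    case False
    have "(1/c) *\<^sub>R t (Suc i) = - t i" using c by simp
    then have "V i = V (Suc i) + (1/c) *\<^sub>R t (Suc i)" by (simp add: t_def)
    then have "V i \<in> E (Suc i)" unfolding in_E using False c by (intro exI[of _ "1/c"]) auto
    moreover have "V i \<in> E i" by (simp add: E_def)
    ultimately have "V i = V (Suc i)" using edge_adj by blast
    then show False using t_ne[of i] by (simp add: t_def)
  qed
qed

end



context spoly begin

lemma delta_ex: "\<exists>\<delta>>0. \<forall>i j x y. E i \<inter> E j = {} \<longrightarrow> x \<in> E i \<longrightarrow> y \<in> E j \<longrightarrow> \<delta> \<le> dist x y"
proof -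
  define F where "F = {(i,j). i < n \<and> j < n \<and> E i \<inter> E j = {}}"
  have "F \<subseteq> {..<n} \<times> {..<n}" unfolding F_def by auto
  then have fF: "finite F" by (rule finite_subset) simp
  define S where "S = (\<lambda>(i,j). setdist (E i) (E j)) ` F"
  define \<delta> where "\<delta> = Min (insert 1 S)"
  have fS: "finite (insert 1 S)" using fF S_def by auto
  have pos: "\<forall>s\<in>insert 1 S. s > 0"
  proof
    fix s assume "s \<in> insert 1 S"
    then show "s > 0"
    proof
      assume "s \<in> S"
      then obtain i j where ij: "(i,j) \<in> F" "s = setdist (E i) (E j)" unfolding S_def by auto
      have "E i \<noteq> {}" "E j \<noteq> {}" unfolding E_def by (metis ends_in_segment(1) empty_iff)+
      moreover have "compact (E i)" "closed (E j)" unfolding E_def by (simp_all add: compact_segment closed_segment)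
      moreover have "E i \<inter> E j = {}" using ij(1) unfolding F_def by simp
      ultimately show "s > 0" using ij(2) setdist_gt_0_compact_closed[of "E i" "E j"] by simp
    qed simp
  qed
  have dpos: "\<delta> > 0" unfolding \<delta>_def using fS pos by auto
  have "\<forall>i j x y. E i \<inter> E j = {} \<longrightarrow> x \<in> E i \<longrightarrow> y \<in> E j \<longrightarrow> \<delta> \<le> dist x y"
  proof (intro allI impI)
    fix i j x y assume h: "E i \<inter> E j = {}" "x \<in> E i" "y \<in> E j"
    have e: "E i = E (i mod n)" "E j = E (j mod n)" using E_mod[of i "i mod n"] E_mod[of j "j mod n"] by auto
    have "E (i mod n) \<inter> E (j mod n) = {}" using h(1) e by simp
    then have "(i mod n, j mod n) \<in> F" unfolding F_def using npos by simp
    then have "setdist (E (i mod n)) (E (j mod n)) \<in> insert 1 S" unfolding S_def by auto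
    then have "\<delta> \<le> setdist (E (i mod n)) (E (j mod n))" unfolding \<delta>_def using fS by auto
    also have "\<dots> \<le> dist x y" using h(2,3) e setdist_le_dist[of x "E (i mod n)" y "E (j mod n)"] by simp
    finally show "\<delta> \<le> dist x y" .
  qed
  then show ?thesis using dpos by (intro exI[of _ \<delta>]) simp
qed

definition delta where
  "delta = (SOME \<delta>. \<delta>>0 \<and> (\<forall>i j x y. E i \<inter> E j = {} \<longrightarrow> x \<in> E i \<longrightarrow> y \<in> E j \<longrightarrow> \<delta> \<le> dist x y))"

lemma delta: "delta > 0" "E i \<inter> E j = {} \<Longrightarrow> x \<in> E i \<Longrightarrow> y \<in> E j \<Longrightarrow> delta \<le> dist x y"
  using someI_ex[OF delta_ex] unfolding delta_def by blast+

definition nv :: "real \<Rightarrow> nat \<Rightarrow> real^2" where "nv \<sigma> k = \<sigma> *\<^sub>R N k"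

lemma t_nv_self [simp]: "t k \<bullet> nv \<sigma> k = 0"
  by (simp add: nv_def N_def)

definition good :: "real \<Rightarrow> nat \<Rightarrow> real \<Rightarrow> real^2 \<Rightarrow> bool" where
  "good \<sigma> k \<gamma> e \<longleftrightarrow> 0 \<le> \<gamma> \<and> \<gamma> \<le> 1 \<and> e \<bullet> nv \<sigma> k > 0 \<and> norm e < delta \<and>
     (t (Suc k) \<bullet> nv \<sigma> k > 0 \<longrightarrow> (\<gamma> - 1) * (t k \<bullet> nv \<sigma> (Suc k)) + e \<bullet> nv \<sigma> (Suc k) > 0) \<and>
     (t (k+n-1) \<bullet> nv \<sigma> k < 0 \<longrightarrow> \<gamma> * (t k \<bullet> nv \<sigma> (k+n-1)) + e \<bullet> nv \<sigma> (k+n-1) > 0)"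

lemma pred_mod: "k mod n = Suc j mod n \<Longrightarrow> j mod n = (k+n-1) mod n"
proof -
  assume h: "k mod n = Suc j mod n"
  have "k+n-1 = k+(n-1)" using npos by simp
  then have "(k+n-1) mod n = (k mod n + (n-1)) mod n" by (simp add: mod_add_left_eq)
  also have "\<dots> = (Suc j mod n + (n-1)) mod n" using h by simp
  also have "\<dots> = (Suc j + (n-1)) mod n" by (simp add: mod_add_left_eq)
  also have "Suc j + (n-1) = j + n" using npos by simp
  finally show ?thesis by simp
qed

lemma V_prev: "V (k+n-1) = V k - t (k+n-1)"
proof -
  have "Suc (k+n-1) = k + n" using npos by simp
  then show ?thesis by (simp add: t_def)
qed

lemma good_point:
  assumes g: "good \<sigma> k \<gamma> e"
  shows "V k + \<gamma> *\<^sub>R t k + e \<notin> PP"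
proof
  define X where "X = V k + \<gamma> *\<^sub>R t k + e"
  assume "V k + \<gamma> *\<^sub>R t k + e \<in> PP"
  then obtain j where j: "X \<in> E j" unfolding PP_eq X_def by auto
  have g1: "0 \<le> \<gamma>" "\<gamma> \<le> 1" "e \<bullet> nv \<sigma> k > 0" "norm e < delta"
    and g2: "t (Suc k) \<bullet> nv \<sigma> k > 0 \<Longrightarrow> (\<gamma> - 1) * (t k \<bullet> nv \<sigma> (Suc k)) + e \<bullet> nv \<sigma> (Suc k) > 0"
    and g3: "t (k+n-1) \<bullet> nv \<sigma> k < 0 \<Longrightarrow> \<gamma> * (t k \<bullet> nv \<sigma> (k+n-1)) + e \<bullet> nv \<sigma> (k+n-1) > 0"
    using g unfolding good_def by auto
  consider (A) "j mod n = k mod n" | (B) "j mod n = Suc k mod n" | (C) "j mod n = (k+n-1) mod n"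
    | (D) "j mod n \<noteq> k mod n" "j mod n \<noteq> Suc k mod n" "j mod n \<noteq> (k+n-1) mod n" by blast
  then show False
  proof cases
    case A
    then have "X \<in> E k" using j E_mod by metis
    then obtain u where "X = V k + u *\<^sub>R t k" by (auto simp: in_E)
    then have "e = (u - \<gamma>) *\<^sub>R t k" unfolding X_def by (simp add: algebra_simps)
    then have "e \<bullet> nv \<sigma> k = 0" by simp
    then show False using g1 by simp
  next
    case B
    then have "X \<in> E (Suc k)" using j E_mod by metis
    then obtain u where u: "0 \<le> u" "X = V (Suc k) + u *\<^sub>R t (Suc k)" by (auto simp: in_E)
    have eq1: "\<gamma> *\<^sub>R t k + e = t k + u *\<^sub>R t (Suc k)" using u unfolding X_def t_def by (simp add: algebra_simps)
    have eq2: "e \<bullet> nv \<sigma> k = u * (t (Suc k) \<bullet> nv \<sigma> k)"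
    proof -
      have "(\<gamma> *\<^sub>R t k + e) \<bullet> nv \<sigma> k = (t k + u *\<^sub>R t (Suc k)) \<bullet> nv \<sigma> k" using eq1 by simp
      then show ?thesis by (simp add: inner_add_left)
    qed
    show False
    proof (cases "t (Suc k) \<bullet> nv \<sigma> k > 0")
      case True
      have "e = (1 - \<gamma>) *\<^sub>R t k + u *\<^sub>R t (Suc k)" using eq1 by (simp add: algebra_simps)
      then have "e \<bullet> nv \<sigma> (Suc k) = (1 - \<gamma>) * (t k \<bullet> nv \<sigma> (Suc k))"
        by (simp add: inner_add_left)
      then show False using g2[OF True] by (simp add: algebra_simps)
    next
      case False
      then show False using eq2 u(1) g1(3) by (metis mult_nonneg_nonpos not_less)
    qed
  next
    case C
    then have "X \<in> E (k+n-1)" using j E_mod by metis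
    then obtain u where u: "u \<le> 1" "X = V (k+n-1) + u *\<^sub>R t (k+n-1)" by (auto simp: in_E)
    have "X = V k + (u - 1) *\<^sub>R t (k+n-1)" using u(2) V_prev[of k] by (simp add: algebra_simps)
    then have eq1: "\<gamma> *\<^sub>R t k + e = (u - 1) *\<^sub>R t (k+n-1)" unfolding X_def by (simp add: algebra_simps)
    have eq2: "e \<bullet> nv \<sigma> k = (u - 1) * (t (k+n-1) \<bullet> nv \<sigma> k)"
    proof -
      have "(\<gamma> *\<^sub>R t k + e) \<bullet> nv \<sigma> k = ((u - 1) *\<^sub>R t (k+n-1)) \<bullet> nv \<sigma> k" using eq1 by simp
      then show ?thesis by (simp add: inner_add_left)
    qed
    show False
    proof (cases "t (k+n-1) \<bullet> nv \<sigma> k < 0")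
      case True
      have "(\<gamma> *\<^sub>R t k + e) \<bullet> nv \<sigma> (k+n-1) = ((u - 1) *\<^sub>R t (k+n-1)) \<bullet> nv \<sigma> (k+n-1)" using eq1 by simp
      then have "\<gamma> * (t k \<bullet> nv \<sigma> (k+n-1)) + e \<bullet> nv \<sigma> (k+n-1) = 0" by (simp add: inner_add_left)
      then show False using g3[OF True] by simp
    next
      case False
      then have "(u - 1) * (t (k+n-1) \<bullet> nv \<sigma> k) \<le> 0" using u(1) by (simp add: mult_nonpos_nonneg)
      then show False using eq2 g1(3) by simp
    qed
  next
    case D
    have kj1: "k mod n \<noteq> Suc j mod n" using D(3) pred_mod by metis
    have kj: "k mod n \<noteq> j mod n" using D(1) by simp
    have "E k \<inter> E j = {}" using E_int[OF kj] D(2) kj1 by simp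
    moreover have "V k + \<gamma> *\<^sub>R t k \<in> E k" using g1 by (auto simp: in_E)
    ultimately have "delta \<le> dist (V k + \<gamma> *\<^sub>R t k) X" using delta(2) j by blast
    moreover have "dist (V k + \<gamma> *\<^sub>R t k) X = norm e" unfolding X_def dist_norm by (simp add: norm_minus_commute)
    ultimately show False using g1 by linarith
  qed
qed

lemma good_convex:
  assumes g0: "good \<sigma> k \<gamma>0 e0" and g1: "good \<sigma> k \<gamma>1 e1" and u: "0 \<le> u" "u \<le> 1"
  shows "good \<sigma> k ((1-u)*\<gamma>0 + u*\<gamma>1) ((1-u) *\<^sub>R e0 + u *\<^sub>R e1)"
proof -
  have cv: "\<And>a b. a > 0 \<Longrightarrow> b > 0 \<Longrightarrow> (1-u)*a + u*b > 0" using conv_pos u by auto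
  have lin: "\<And>c m. ((1-u)*\<gamma>0 + u*\<gamma>1 - 1) * c + ((1-u) *\<^sub>R e0 + u *\<^sub>R e1) \<bullet> m
         = (1-u) * ((\<gamma>0 - 1) * c + e0 \<bullet> m) + u * ((\<gamma>1 - 1) * c + e1 \<bullet> m)"
    by (simp add: inner_add_left algebra_simps)
  have lin2: "\<And>c m. ((1-u)*\<gamma>0 + u*\<gamma>1) * c + ((1-u) *\<^sub>R e0 + u *\<^sub>R e1) \<bullet> m
         = (1-u) * (\<gamma>0 * c + e0 \<bullet> m) + u * (\<gamma>1 * c + e1 \<bullet> m)"
    by (simp add: inner_add_left algebra_simps)
  have lin3: "((1-u) *\<^sub>R e0 + u *\<^sub>R e1) \<bullet> nv \<sigma> k = (1-u) * (e0 \<bullet> nv \<sigma> k) + u * (e1 \<bullet> nv \<sigma> k)"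
    by (simp add: inner_add_left)
  have nrm: "norm ((1-u) *\<^sub>R e0 + u *\<^sub>R e1) < delta"
  proof -
    have "norm ((1-u) *\<^sub>R e0 + u *\<^sub>R e1) \<le> (1-u) * norm e0 + u * norm e1"
      using u by (metis (no_types) abs_of_nonneg diff_ge_0_iff_ge norm_scaleR norm_triangle_ineq)
    also have "\<dots> \<le> (1-u) * max (norm e0) (norm e1) + u * max (norm e0) (norm e1)"
      using u by (intro add_mono mult_left_mono) auto
    also have "\<dots> = max (norm e0) (norm e1)" by (simp add: algebra_simps)
    also have "\<dots> < delta" using g0 g1 unfolding good_def by auto
    finally show ?thesis .
  qed
  have gam: "0 \<le> (1-u)*\<gamma>0 + u*\<gamma>1" "(1-u)*\<gamma>0 + u*\<gamma>1 \<le> 1"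
  proof -
    have "0 \<le> \<gamma>0" "\<gamma>0 \<le> 1" "0 \<le> \<gamma>1" "\<gamma>1 \<le> 1" using g0 g1 unfolding good_def by auto
    then show "0 \<le> (1-u)*\<gamma>0 + u*\<gamma>1" "(1-u)*\<gamma>0 + u*\<gamma>1 \<le> 1"
      using u by (auto intro!: add_nonneg_nonneg mult_nonneg_nonneg convex_bound_le)
  qed
  show ?thesis unfolding good_def
  proof (intro conjI impI)
    show "0 < ((1-u) *\<^sub>R e0 + u *\<^sub>R e1) \<bullet> nv \<sigma> k"
      unfolding lin3 using g0 g1 cv unfolding good_def by blast
    assume h: "0 < t (Suc k) \<bullet> nv \<sigma> k"
    have "0 < (\<gamma>0 - 1) * (t k \<bullet> nv \<sigma> (Suc k)) + e0 \<bullet> nv \<sigma> (Suc k)"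
         "0 < (\<gamma>1 - 1) * (t k \<bullet> nv \<sigma> (Suc k)) + e1 \<bullet> nv \<sigma> (Suc k)"
      using g0 g1 h unfolding good_def by blast+
    then show "0 < ((1-u)*\<gamma>0 + u*\<gamma>1 - 1) * (t k \<bullet> nv \<sigma> (Suc k)) + ((1-u) *\<^sub>R e0 + u *\<^sub>R e1) \<bullet> nv \<sigma> (Suc k)"
      unfolding lin by (rule cv)
  next
    assume h: "t (k+n-1) \<bullet> nv \<sigma> k < 0"
    have "0 < \<gamma>0 * (t k \<bullet> nv \<sigma> (k+n-1)) + e0 \<bullet> nv \<sigma> (k+n-1)"
         "0 < \<gamma>1 * (t k \<bullet> nv \<sigma> (k+n-1)) + e1 \<bullet> nv \<sigma> (k+n-1)"
      using g0 g1 h unfolding good_def by blast+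
    then show "0 < ((1-u)*\<gamma>0 + u*\<gamma>1) * (t k \<bullet> nv \<sigma> (k+n-1)) + ((1-u) *\<^sub>R e0 + u *\<^sub>R e1) \<bullet> nv \<sigma> (k+n-1)"
      unfolding lin2 by (rule cv)
  qed (use gam nrm in auto)
qed

lemma good_segment:
  assumes "good \<sigma> k \<gamma>0 e0" "good \<sigma> k \<gamma>1 e1"
  shows "closed_segment (V k + \<gamma>0 *\<^sub>R t k + e0) (V k + \<gamma>1 *\<^sub>R t k + e1) \<inter> PP = {}"
proof -
  { fix x assume "x \<in> closed_segment (V k + \<gamma>0 *\<^sub>R t k + e0) (V k + \<gamma>1 *\<^sub>R t k + e1)"
    then obtain u where u: "0 \<le> u" "u \<le> 1"
      "x = (1-u) *\<^sub>R (V k + \<gamma>0 *\<^sub>R t k + e0) + u *\<^sub>R (V k + \<gamma>1 *\<^sub>R t k + e1)"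
      by (auto simp: in_segment)
    have "x = V k + ((1-u)*\<gamma>0 + u*\<gamma>1) *\<^sub>R t k + ((1-u) *\<^sub>R e0 + u *\<^sub>R e1)"
      using u(3) by (simp add: algebra_simps)
    then have "x \<notin> PP" using good_point[OF good_convex[OF assms u(1,2)]] by simp
  }
  then show ?thesis by blast
qed

end



lemma ev_lin: "(c::real) > 0 \<Longrightarrow> eventually (\<lambda>s. c + s * b > 0) (at_right 0)"
proof -
  assume c: "c > 0"
  have "\<forall>y>0. y < c / (\<bar>b\<bar> + 1) \<longrightarrow> c + y * b > 0"
  proof (intro allI impI)
    fix y :: real assume y: "y > 0" "y < c / (\<bar>b\<bar> + 1)"
    then have "y * (\<bar>b\<bar> + 1) < c" by (simp add: field_simps)
    then have A: "y * \<bar>b\<bar> + y < c" by (simp add: distrib_left)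
    have "y * (- b) \<le> y * \<bar>b\<bar>" using y(1) by (intro mult_left_mono) auto
    then have B: "- (y * b) \<le> y * \<bar>b\<bar>" by simp
    show "c + y * b > 0" using A B y(1) by linarith
  qed
  moreover have "c / (\<bar>b\<bar> + 1) > 0" using c by simp
  ultimately show ?thesis unfolding eventually_at_right_field by blast
qed

lemma ev_pos: "eventually (\<lambda>s::real. s > 0) (at_right 0)"
  unfolding eventually_at_right_field by (intro exI[of _ 1]) auto

lemma ev_small: "(d::real) > 0 \<Longrightarrow> eventually (\<lambda>s::real. norm (s *\<^sub>R v) < d) (at_right 0)"
proof -
  assume d: "d > 0"
  have "eventually (\<lambda>s. d + s * (- norm v) > 0) (at_right 0)" by (rule ev_lin[OF d])
  then show ?thesis using ev_pos
    by eventually_elim (simp add: algebra_simps)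
qed

context spoly begin

lemma nv_skew: "t i \<bullet> nv \<sigma> j = - (t j \<bullet> nv \<sigma> i)"
  unfolding nv_def N_def using rot_skew[of "t j" "t i"] by (simp add: inner_commute)

lemma norm_nv: "\<sigma> = 1 \<or> \<sigma> = -1 \<Longrightarrow> norm (nv \<sigma> k) = norm (N k)"
  unfolding nv_def by auto

definition nn where "nn \<sigma> k = (1 / norm (N k)) *\<^sub>R nv \<sigma> k"
definition d where "d \<sigma> k = nn \<sigma> (k+n-1) + nn \<sigma> k"
definition w where "w \<sigma> \<epsilon> k = V k + \<epsilon> *\<^sub>R d \<sigma> k"

lemma nn_unit: "\<sigma> = 1 \<or> \<sigma> = -1 \<Longrightarrow> nn \<sigma> k \<bullet> nn \<sigma> k = 1"
proof -
  assume s: "\<sigma> = 1 \<or> \<sigma> = -1"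
  have "norm (nn \<sigma> k) = 1" unfolding nn_def using norm_nv[OF s, of k] N_ne[of k] by simp
  then show ?thesis by (simp add: dot_square_norm)
qed

lemma nv_nn: "\<sigma> = 1 \<or> \<sigma> = -1 \<Longrightarrow> nv \<sigma> k = norm (N k) *\<^sub>R nn \<sigma> k"
  unfolding nn_def using N_ne[of k] by simp

lemma t_succ_pred: "t (Suc (k+n-1)) = t k"
proof -
  have "Suc (k+n-1) = k + n" using npos by simp
  then show ?thesis using t_mod[of "k+n" k] by simp
qed

lemma nn_sum_pos:
  assumes s: "\<sigma> = 1 \<or> \<sigma> = -1"
  shows "nn \<sigma> (k+n-1) \<bullet> nn \<sigma> k + 1 > 0"
proof -
  let ?a = "nn \<sigma> (k+n-1)" and ?b = "nn \<sigma> k"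
  have "norm (?a + ?b)^2 = ?a \<bullet> ?a + 2 * (?a \<bullet> ?b) + ?b \<bullet> ?b"
    by (simp add: power2_norm_eq_inner inner_add_left inner_add_right inner_commute)
  also have "\<dots> = 2 * (?a \<bullet> ?b + 1)" using nn_unit[OF s] by simp
  finally have eq: "norm (?a + ?b)^2 = 2 * (?a \<bullet> ?b + 1)" .
  have "?a + ?b \<noteq> 0"
  proof
    assume h: "?a + ?b = 0"
    define c where "c = norm (N (k+n-1)) / norm (N k)"
    have cpos: "c > 0" unfolding c_def using N_ne by simp
    have "nv \<sigma> (k+n-1) = - c *\<^sub>R nv \<sigma> k"
    proof -
      have "?a = - ?b" using h by (simp add: eq_neg_iff_add_eq_0)
      then have "nv \<sigma> (k+n-1) = norm (N (k+n-1)) *\<^sub>R (- ?b)" using nv_nn[OF s] by metis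
      also have "\<dots> = - c *\<^sub>R nv \<sigma> k" unfolding c_def using nv_nn[OF s, of k] N_ne[of k] by simp
      finally show ?thesis .
    qed
    note eqn = this
    have ss: "\<sigma> * \<sigma> = 1" using s by auto
    have "N (k+n-1) = (\<sigma>*\<sigma>) *\<^sub>R N (k+n-1)" using ss by simp
    also have "\<dots> = \<sigma> *\<^sub>R nv \<sigma> (k+n-1)" unfolding nv_def by simp
    also have "\<dots> = \<sigma> *\<^sub>R (- c *\<^sub>R nv \<sigma> k)" using eqn by simp
    also have "\<dots> = (- c * (\<sigma> * \<sigma>)) *\<^sub>R N k" unfolding nv_def by (simp add: algebra_simps)
    finally have "N (k+n-1) = - c *\<^sub>R N k" using ss by simp
    then have "rot (t (k+n-1)) = rot ((- c) *\<^sub>R t k)" unfolding N_def by (simp add: rot_scale rot_minus)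
    then have "t (k+n-1) = (- c) *\<^sub>R t k" by (rule rot_inj)
    then have h2: "t (Suc (k+n-1)) = (- (1/c)) *\<^sub>R t (k+n-1)" using cpos t_succ_pred by simp
    moreover have "1/c > 0" using cpos by simp
    ultimately show False using no_fold[of "k+n-1"] by blast
  qed
  then have "norm (?a + ?b) > 0" by simp
  then have "norm (?a + ?b)^2 > 0" by simp
  then have "0 < 2 * (?a \<bullet> ?b + 1)" by (simp only: eq)
  then show ?thesis by simp
qed

lemma d_pos:
  assumes s: "\<sigma> = 1 \<or> \<sigma> = -1"
  shows "d \<sigma> k \<bullet> nv \<sigma> k > 0" "d \<sigma> k \<bullet> nv \<sigma> (k+n-1) > 0"
proof -
  have p: "nn \<sigma> (k+n-1) \<bullet> nn \<sigma> k + 1 > 0" by (rule nn_sum_pos[OF s])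
  have "d \<sigma> k \<bullet> nv \<sigma> k = norm (N k) * (nn \<sigma> (k+n-1) \<bullet> nn \<sigma> k + 1)"
    unfolding d_def nv_nn[OF s, of k] using nn_unit[OF s, of k] by (simp add: inner_add_left algebra_simps)
  then show "d \<sigma> k \<bullet> nv \<sigma> k > 0" using p N_ne[of k] by simp
  have "d \<sigma> k \<bullet> nv \<sigma> (k+n-1) = norm (N (k+n-1)) * (nn \<sigma> (k+n-1) \<bullet> nn \<sigma> k + 1)"
    unfolding d_def nv_nn[OF s, of "k+n-1"] using nn_unit[OF s, of "k+n-1"]
    by (simp add: inner_add_left algebra_simps inner_commute)
  then show "d \<sigma> k \<bullet> nv \<sigma> (k+n-1) > 0" using p N_ne[of "k+n-1"] by simp
qed

lemma pred_Suc_mod: "(Suc k + n - 1) mod n = k mod n"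
  using npos by simp

lemma nv_mod: "i mod n = j mod n \<Longrightarrow> nv \<sigma> i = nv \<sigma> j"
  unfolding nv_def using N_mod by metis

lemma d_pos2:
  assumes s: "\<sigma> = 1 \<or> \<sigma> = -1"
  shows "d \<sigma> (Suc k) \<bullet> nv \<sigma> k > 0"
  using d_pos(2)[OF s, of "Suc k"] nv_mod[OF pred_Suc_mod, of \<sigma> k] by simp

lemma ev_good0:
  assumes s: "\<sigma> = 1 \<or> \<sigma> = -1"
  shows "eventually (\<lambda>\<epsilon>. good \<sigma> k 0 (\<epsilon> *\<^sub>R d \<sigma> k) \<and> good \<sigma> k 1 (\<epsilon> *\<^sub>R d \<sigma> (Suc k))) (at_right 0)"
proof -
  have e1: "eventually (\<lambda>\<epsilon>. t (Suc k) \<bullet> nv \<sigma> k > 0 \<longrightarrow>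
      (0 - 1) * (t k \<bullet> nv \<sigma> (Suc k)) + (\<epsilon> *\<^sub>R d \<sigma> k) \<bullet> nv \<sigma> (Suc k) > 0) (at_right 0)"
  proof (cases "t (Suc k) \<bullet> nv \<sigma> k > 0")
    case True
    then have "eventually (\<lambda>\<epsilon>. t (Suc k) \<bullet> nv \<sigma> k + \<epsilon> * (d \<sigma> k \<bullet> nv \<sigma> (Suc k)) > 0) (at_right 0)"
      by (rule ev_lin)
    then show ?thesis
    proof eventually_elim
      case (elim \<epsilon>)
      have sk: "t k \<bullet> nv \<sigma> (Suc k) = - (t (Suc k) \<bullet> nv \<sigma> k)" by (rule nv_skew)
      have e1: "(\<epsilon> *\<^sub>R d \<sigma> k) \<bullet> nv \<sigma> (Suc k) = \<epsilon> * (d \<sigma> k \<bullet> nv \<sigma> (Suc k))" by simp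
      have e2: "(0 - 1) * (t k \<bullet> nv \<sigma> (Suc k)) = t (Suc k) \<bullet> nv \<sigma> k" using sk by simp
      show ?case using elim e1 e2 by (intro impI) linarith
    qed
  qed simp
  have e2: "eventually (\<lambda>\<epsilon>. t (k+n-1) \<bullet> nv \<sigma> k < 0 \<longrightarrow>
      1 * (t k \<bullet> nv \<sigma> (k+n-1)) + (\<epsilon> *\<^sub>R d \<sigma> (Suc k)) \<bullet> nv \<sigma> (k+n-1) > 0) (at_right 0)"
  proof (cases "t (k+n-1) \<bullet> nv \<sigma> k < 0")
    case True
    then have "- (t (k+n-1) \<bullet> nv \<sigma> k) > 0" by simp
    then have "eventually (\<lambda>\<epsilon>. - (t (k+n-1) \<bullet> nv \<sigma> k) + \<epsilon> * (d \<sigma> (Suc k) \<bullet> nv \<sigma> (k+n-1)) > 0) (at_right 0)"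
      by (rule ev_lin)
    then show ?thesis
    proof eventually_elim
      case (elim \<epsilon>)
      have sk: "t k \<bullet> nv \<sigma> (k+n-1) = - (t (k+n-1) \<bullet> nv \<sigma> k)" by (rule nv_skew)
      have e1: "(\<epsilon> *\<^sub>R d \<sigma> (Suc k)) \<bullet> nv \<sigma> (k+n-1) = \<epsilon> * (d \<sigma> (Suc k) \<bullet> nv \<sigma> (k+n-1))" by simp
      have e2: "1 * (t k \<bullet> nv \<sigma> (k+n-1)) = - (t (k+n-1) \<bullet> nv \<sigma> k)" using sk by simp
      show ?case using elim e1 e2 by (intro impI) linarith
    qed
  qed simp
  have e3: "eventually (\<lambda>\<epsilon>. norm (\<epsilon> *\<^sub>R d \<sigma> k) < delta) (at_right 0)" by (rule ev_small[OF delta(1)])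
  have e4: "eventually (\<lambda>\<epsilon>. norm (\<epsilon> *\<^sub>R d \<sigma> (Suc k)) < delta) (at_right 0)" by (rule ev_small[OF delta(1)])
  have dp: "d \<sigma> k \<bullet> nv \<sigma> k > 0" "d \<sigma> k \<bullet> nv \<sigma> (k+n-1) > 0" "d \<sigma> (Suc k) \<bullet> nv \<sigma> k > 0"
     "d \<sigma> (Suc k) \<bullet> nv \<sigma> (Suc k) > 0"
    using d_pos[OF s] d_pos2[OF s] by auto
  show ?thesis using e1 e2 e3 e4 ev_pos
  proof eventually_elim
    case (elim \<epsilon>)
    then show ?case unfolding good_def using dp by auto
  qed
qed

definition chain_ok where
  "chain_ok \<sigma> \<epsilon> \<longleftrightarrow> \<epsilon> > 0 \<and> (\<forall>k. good \<sigma> k 0 (\<epsilon> *\<^sub>R d \<sigma> k) \<and> good \<sigma> k 1 (\<epsilon> *\<^sub>R d \<sigma> (Suc k)))"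

lemma mod_pred_eq: "(k mod n + n - 1) mod n = (k + n - 1) mod n"
proof -
  have "k mod n + n - 1 = k mod n + (n - 1)" "k + n - 1 = k + (n-1)" using npos by auto
  then show ?thesis by (simp add: mod_add_left_eq)
qed

lemma good_mod: "good \<sigma> (k mod n) \<gamma> e = good \<sigma> k \<gamma> e"
proof -
  have m: "k mod n mod n = k mod n" "Suc (k mod n) mod n = Suc k mod n" "(k mod n + n - 1) mod n = (k + n - 1) mod n"
    using mod_Suc_eq mod_pred_eq by auto
  have a: "t (k mod n) = t k" "t (Suc (k mod n)) = t (Suc k)" "t (k mod n + n - 1) = t (k + n - 1)"
    using t_mod[OF m(1)] t_mod[OF m(2)] t_mod[OF m(3)] by auto
  have b: "nv \<sigma> (k mod n) = nv \<sigma> k" "nv \<sigma> (Suc (k mod n)) = nv \<sigma> (Suc k)" "nv \<sigma> (k mod n + n - 1) = nv \<sigma> (k + n - 1)"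
    using nv_mod[OF m(1)] nv_mod[OF m(2)] nv_mod[OF m(3)] by auto
  show ?thesis unfolding good_def a b ..
qed

lemma d_mod: "i mod n = j mod n \<Longrightarrow> d \<sigma> i = d \<sigma> j"
proof -
  assume h: "i mod n = j mod n"
  have h2: "(i + n - 1) mod n = (j + n - 1) mod n" using h mod_pred_eq by metis
  have "N (i + n - 1) = N (j + n - 1)" "nv \<sigma> (i + n - 1) = nv \<sigma> (j + n - 1)"
    "N i = N j" "nv \<sigma> i = nv \<sigma> j" using N_mod[OF h2] nv_mod[OF h2] N_mod[OF h] nv_mod[OF h] by blast+
  then show ?thesis unfolding d_def nn_def by simp
qed

lemma exists_eps: "\<exists>\<epsilon>. chain_ok 1 \<epsilon> \<and> chain_ok (-1) \<epsilon>"
proof -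
  have "\<And>\<sigma>. \<sigma> = 1 \<or> \<sigma> = -1 \<Longrightarrow> eventually (\<lambda>\<epsilon>. \<forall>k\<in>{..<n}. good \<sigma> k 0 (\<epsilon> *\<^sub>R d \<sigma> k) \<and> good \<sigma> k 1 (\<epsilon> *\<^sub>R d \<sigma> (Suc k))) (at_right 0)"
    by (rule eventually_ball_finite) (auto intro: ev_good0)
  then have "eventually (\<lambda>\<epsilon>. (\<forall>k\<in>{..<n}. good 1 k 0 (\<epsilon> *\<^sub>R d 1 k) \<and> good 1 k 1 (\<epsilon> *\<^sub>R d 1 (Suc k))) \<and>
      (\<forall>k\<in>{..<n}. good (-1) k 0 (\<epsilon> *\<^sub>R d (-1) k) \<and> good (-1) k 1 (\<epsilon> *\<^sub>R d (-1) (Suc k))) \<and> \<epsilon> > 0) (at_right 0)"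
    using ev_pos by (simp add: eventually_conj_iff)
  then obtain \<epsilon> where e: "(\<forall>k\<in>{..<n}. good 1 k 0 (\<epsilon> *\<^sub>R d 1 k) \<and> good 1 k 1 (\<epsilon> *\<^sub>R d 1 (Suc k))) \<and>
      (\<forall>k\<in>{..<n}. good (-1) k 0 (\<epsilon> *\<^sub>R d (-1) k) \<and> good (-1) k 1 (\<epsilon> *\<^sub>R d (-1) (Suc k))) \<and> \<epsilon> > 0"
    using eventually_happens'[OF trivial_limit_at_right_real] by blast
  have "\<And>\<sigma> k. (\<forall>k\<in>{..<n}. good \<sigma> k 0 (\<epsilon> *\<^sub>R d \<sigma> k) \<and> good \<sigma> k 1 (\<epsilon> *\<^sub>R d \<sigma> (Suc k))) \<Longrightarrow>
      good \<sigma> k 0 (\<epsilon> *\<^sub>R d \<sigma> k) \<and> good \<sigma> k 1 (\<epsilon> *\<^sub>R d \<sigma> (Suc k))"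
  proof -
    fix \<sigma> k assume h: "\<forall>k\<in>{..<n}. good \<sigma> k 0 (\<epsilon> *\<^sub>R d \<sigma> k) \<and> good \<sigma> k 1 (\<epsilon> *\<^sub>R d \<sigma> (Suc k))"
    have "k mod n \<in> {..<n}" using npos by simp
    then have "good \<sigma> (k mod n) 0 (\<epsilon> *\<^sub>R d \<sigma> (k mod n)) \<and> good \<sigma> (k mod n) 1 (\<epsilon> *\<^sub>R d \<sigma> (Suc (k mod n)))"
      using h by blast
    moreover have "d \<sigma> (k mod n) = d \<sigma> k" "d \<sigma> (Suc (k mod n)) = d \<sigma> (Suc k)"
      using d_mod[of "k mod n" k] d_mod[of "Suc (k mod n)" "Suc k"] mod_Suc_eq by auto
    ultimately show "good \<sigma> k 0 (\<epsilon> *\<^sub>R d \<sigma> k) \<and> good \<sigma> k 1 (\<epsilon> *\<^sub>R d \<sigma> (Suc k))"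
      using good_mod by simp
  qed
  then show ?thesis using e unfolding chain_ok_def by blast
qed

lemma chain_seg:
  assumes "chain_ok \<sigma> \<epsilon>"
  shows "closed_segment (w \<sigma> \<epsilon> k) (w \<sigma> \<epsilon> (Suc k)) \<inter> PP = {}"
proof -
  have g: "good \<sigma> k 0 (\<epsilon> *\<^sub>R d \<sigma> k)" "good \<sigma> k 1 (\<epsilon> *\<^sub>R d \<sigma> (Suc k))"
    using assms unfolding chain_ok_def by auto
  have "w \<sigma> \<epsilon> k = V k + 0 *\<^sub>R t k + \<epsilon> *\<^sub>R d \<sigma> k" "w \<sigma> \<epsilon> (Suc k) = V k + 1 *\<^sub>R t k + \<epsilon> *\<^sub>R d \<sigma> (Suc k)"
    unfolding w_def t_def by simp_all
  then show ?thesis using good_segment[OF g] by simp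
qed

end



context spoly begin

lemma V_in_PP: "V i \<in> PP"
  unfolding PP_eq E_def by blast

lemma E_sub_PP: "E i \<subseteq> PP"
  unfolding PP_eq by blast

lemma compact_PP: "compact PP"
  unfolding polygon_def poly_edge_def by (intro compact_UN) (auto simp: compact_segment)

lemma parallel_of_perp:
  assumes "x \<noteq> 0" "y \<bullet> rot x = 0"
  obtains c where "y = c *\<^sub>R x"
  using rot_perp_parallel[OF assms] by blast

lemma exists_offline:
  assumes a: "a \<notin> PP"
  shows "\<exists>j. (a - V j) \<bullet> N j \<noteq> 0"
proof (rule ccontr)
  assume "\<not> ?thesis"
  then have H: "\<And>j. (a - V j) \<bullet> N j = 0" by auto
  have tpar: "t i \<bullet> N 0 = 0" for i
  proof (induction i)
    case 0 show ?case by (simp add: N_def)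
  next
    case (Suc i)
    define y where "y = a - V (Suc i)"
    have yne: "y \<noteq> 0" using a V_in_PP[of "Suc i"] unfolding y_def by auto
    have "y \<bullet> N i = (a - V i) \<bullet> N i - t i \<bullet> N i" unfolding y_def t_def by (simp add: inner_diff_left)
    then have "y \<bullet> rot (t i) = 0" using H[of i] by (simp add: N_def)
    then obtain c1 where c1: "y = c1 *\<^sub>R t i" using parallel_of_perp t_ne by metis
    have "t (Suc i) \<bullet> rot y = 0" using H[of "Suc i"] unfolding y_def N_def
      using rot_skew[of "t (Suc i)" "a - V (Suc i)"] by (simp add: inner_commute)
    then obtain c2 where c2: "t (Suc i) = c2 *\<^sub>R y" using parallel_of_perp yne by metis
    have "t (Suc i) = (c2 * c1) *\<^sub>R t i" using c1 c2 by simp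
    then show ?case using Suc by simp
  qed
  have vpar: "(V i - V 0) \<bullet> N 0 = 0" for i
  proof (induction i)
    case (Suc i)
    have eqn: "V (Suc i) - V 0 = (V i - V 0) + t i" unfolding t_def by simp
    show ?case unfolding eqn inner_add_left using Suc tpar[of i] by simp
  qed simp
  define c where "c i = ((V i - V 0) \<bullet> t 0) / (t 0 \<bullet> t 0)" for i
  have Vc: "V i = V 0 + c i *\<^sub>R t 0" for i
    using rot_perp_parallel[OF t_ne[of 0], of "V i - V 0"] vpar[of i] unfolding c_def N_def
    by (simp add: algebra_simps)
  have cmod: "c i = c (i mod n)" for i unfolding c_def using V_mod[of i "i mod n"] by simp
  obtain m where m: "m < n" "\<And>i. i < n \<Longrightarrow> c i \<le> c m"
  proof -
    have "finite (c ` {..<n})" "c ` {..<n} \<noteq> {}" using npos by auto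
    then have "Max (c ` {..<n}) \<in> c ` {..<n}" by (rule Max_in)
    then obtain m where "m < n" "c m = Max (c ` {..<n})" by auto
    moreover have "\<And>i. i < n \<Longrightarrow> c i \<le> Max (c ` {..<n})" by simp
    ultimately show ?thesis using that by metis
  qed
  have cle: "c i \<le> c m" for i using m(2)[of "i mod n"] cmod[of i] npos by simp
  have tm: "t m = (c (Suc m) - c m) *\<^sub>R t 0" unfolding t_def[of m] using Vc[of m] Vc[of "Suc m"]
    by (simp add: algebra_simps)
  have tp: "t (m+n-1) = (c m - c (m+n-1)) *\<^sub>R t 0"
  proof -
    have "Suc (m+n-1) = m+n" using npos by simp
    then have "t (m+n-1) = V m - V (m+n-1)" unfolding t_def[of "m+n-1"] by simp
    then show ?thesis using Vc[of m] Vc[of "m+n-1"] by (simp add: algebra_simps)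
  qed
  define A where "A = c m - c (Suc m)"
  define B where "B = c m - c (m+n-1)"
  have "A \<noteq> 0" using tm t_ne[of m] unfolding A_def by auto
  then have Apos: "A > 0" using cle[of "Suc m"] unfolding A_def by simp
  have "B \<noteq> 0" using tp t_ne[of "m+n-1"] unfolding B_def by auto
  then have Bpos: "B > 0" using cle[of "m+n-1"] unfolding B_def by simp
  have "t (Suc (m+n-1)) = t m" by (rule t_succ_pred)
  also have "\<dots> = (- A) *\<^sub>R t 0" using tm unfolding A_def by simp
  also have "\<dots> = (- (A/B)) *\<^sub>R (B *\<^sub>R t 0)" using Bpos by simp
  also have "B *\<^sub>R t 0 = t (m+n-1)" using tp unfolding B_def by simp
  finally have "t (Suc (m+n-1)) = (- (A/B)) *\<^sub>R t (m+n-1)" .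
  moreover have "A/B > 0" using Apos Bpos by simp
  ultimately show False using no_fold[of "m+n-1"] by blast
qed

lemma subsingleton_finite: "(\<And>x y. x \<in> S \<Longrightarrow> y \<in> S \<Longrightarrow> x = y) \<Longrightarrow> finite S"
proof (cases "S = {}")
  case False
  assume h: "\<And>x y. x \<in> S \<Longrightarrow> y \<in> S \<Longrightarrow> x = y"
  then obtain x where "x \<in> S" using False by auto
  then have "S \<subseteq> {x}" using h by auto
  then show ?thesis using finite_subset by blast
qed simp

lemma exists_q:
  assumes a: "a \<notin> PP"
  shows "\<exists>q\<in>PP. \<forall>i. V i \<notin> closed_segment a q"
proof -
  obtain j where j: "(a - V j) \<bullet> N j \<noteq> 0" using exists_offline[OF a] by auto
  define K where "K = (V j - a) \<bullet> N j"
  have K: "K \<noteq> 0" using j unfolding K_def by (metis inner_minus_left minus_diff_eq neg_equal_0_iff_equal)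
  define q where "q u = V j + u *\<^sub>R t j" for u
  define B where "B i = {u. V i \<in> closed_segment a (q u)}" for i
  have sub: "\<And>i u u'. u \<in> B i \<Longrightarrow> u' \<in> B i \<Longrightarrow> u = u'"
  proof -
    fix i u u' assume h: "u \<in> B i" "u' \<in> B i"
    obtain \<alpha> where al: "V i = (1 - \<alpha>) *\<^sub>R a + \<alpha> *\<^sub>R q u" using h(1) unfolding B_def in_segment by auto
    obtain \<beta> where be: "V i = (1 - \<beta>) *\<^sub>R a + \<beta> *\<^sub>R q u'" using h(2) unfolding B_def in_segment by auto
    have al2: "V i - a = \<alpha> *\<^sub>R (q u - a)" using al by (simp add: algebra_simps)
    have be2: "V i - a = \<beta> *\<^sub>R (q u' - a)" using be by (simp add: algebra_simps)
    have qN: "\<And>u. (q u - a) \<bullet> N j = K" unfolding q_def K_def N_def by (simp add: inner_add_left inner_diff_left algebra_simps)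
    have e1: "(V i - a) \<bullet> N j = \<alpha> * K" unfolding al2 using qN[of u] by simp
    have e2: "(V i - a) \<bullet> N j = \<beta> * K" unfolding be2 using qN[of u'] by simp
    from e1 e2 have "\<alpha> * K = \<beta> * K" by linarith
    then have ab: "\<alpha> = \<beta>" using K mult_cancel_right by blast
    have "\<alpha> \<noteq> 0"
    proof
      assume "\<alpha> = 0"
      then have "V i = a" using al2 by simp
      then show False using a V_in_PP[of i] by simp
    qed
    then have "q u = q u'" using al2 be2 ab by simp
    then have "(u - u') *\<^sub>R t j = 0" unfolding q_def by (simp add: algebra_simps)
    then show "u = u'" using t_ne by simp
  qed
  have fB: "finite (B i)" for i by (rule subsingleton_finite) (rule sub)
  have fin: "finite (\<Union>i<n. B i)" using fB by simp
  have "infinite {0<..<(1::real)}" by simp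
  then have "\<not> {0<..<(1::real)} \<subseteq> (\<Union>i<n. B i)" using fin finite_subset by blast
  then obtain u where u: "u \<in> {0<..<(1::real)}" "u \<notin> (\<Union>i<n. B i)" by blast
  have "q u \<in> E j" unfolding in_E q_def using u(1) by (intro exI[of _ u]) simp
  then have qin: "q u \<in> PP" using E_sub_PP[of j] by blast
  have "\<forall>i. V i \<notin> closed_segment a (q u)"
  proof
    fix i
    have "i mod n < n" using npos by simp
    then have "u \<notin> B (i mod n)" using u(2) by blast
    then show "V i \<notin> closed_segment a (q u)" unfolding B_def using V_mod[of i "i mod n"] by simp
  qed
  then show ?thesis using qin by blast
qed

end



context spoly begin

lemma first_hit:
  assumes a: "a \<notin> PP" and q: "q \<in> PP" and nv: "\<forall>i. V i \<notin> closed_segment a q"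
  shows "\<exists>k lam v. 0 < lam \<and> lam < 1 \<and> v \<bullet> N k \<noteq> 0 \<and>
     (\<forall>s. 0 < s \<and> s \<le> 1 \<longrightarrow> closed_segment a (V k + lam *\<^sub>R t k + s *\<^sub>R v) \<inter> PP = {})"
proof -
  define f where "f s = a + s *\<^sub>R (q - a)" for s :: real
  define T where "T = {0..1} \<inter> f -` PP"
  have cf: "continuous (at s) f" for s unfolding f_def by (intro continuous_intros)
  have "closed (f -` PP)" using compact_PP cf by (intro continuous_closed_vimage) (auto intro: compact_imp_closed)
  then have cT: "compact T" unfolding T_def by (intro compact_Int_closed) auto
  have "1 \<in> T" unfolding T_def f_def using q by simp
  then have "T \<noteq> {}" by auto
  then obtain s0 where s0: "s0 \<in> T" "\<And>s. s \<in> T \<Longrightarrow> s0 \<le> s" using compact_attains_inf[OF cT] by blast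
  have s0b: "0 \<le> s0" "s0 \<le> 1" "f s0 \<in> PP" using s0(1) unfolding T_def by auto
  have below: "f r \<notin> PP" if "0 \<le> r" "r < s0" for r
  proof
    assume "f r \<in> PP"
    then have "r \<in> T" unfolding T_def using that s0b by auto
    then show False using s0(2) that by fastforce
  qed
  define h where "h = f s0"
  have "h \<in> closed_segment a q" unfolding h_def f_def in_segment using s0b
    by (intro exI[of _ s0]) (simp add: algebra_simps)
  then have hnv: "\<And>i. h \<noteq> V i" using nv by auto
  obtain k where hk: "h \<in> E k" using s0b(3) unfolding h_def PP_eq by auto
  then obtain lam where la: "0 \<le> lam" "lam \<le> 1" "h = V k + lam *\<^sub>R t k" by (auto simp: in_E)
  have "lam \<noteq> 0" using la hnv[of k] by auto
  moreover have "lam \<noteq> 1" using la hnv[of "Suc k"] unfolding t_def by auto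
  ultimately have la2: "0 < lam" "lam < 1" using la by auto
  define v where "v = a - h"
  have seg: "closed_segment a (V k + lam *\<^sub>R t k + s *\<^sub>R v) \<inter> PP = {}" if s: "0 < s" "s \<le> 1" for s
  proof -
    have eq: "V k + lam *\<^sub>R t k + s *\<^sub>R v = f ((1 - s) * s0)"
      unfolding v_def la(3)[symmetric] h_def f_def by (simp add: algebra_simps)
    have "s0 \<noteq> 0" using a s0b(3) unfolding f_def by auto
    then have "s0 > 0" using s0b(1) by simp
    { fix x assume "x \<in> closed_segment a (f ((1 - s) * s0))"
      then obtain \<mu> where mu: "0 \<le> \<mu>" "\<mu> \<le> 1" "x = (1 - \<mu>) *\<^sub>R a + \<mu> *\<^sub>R f ((1 - s) * s0)"
        by (auto simp: in_segment)
      have "x = f (\<mu> * ((1 - s) * s0))" unfolding mu(3) f_def by (simp add: algebra_simps)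
      moreover have "\<mu> * ((1 - s) * s0) < s0"
      proof -
        have "\<mu> * ((1 - s) * s0) \<le> (1 - s) * s0" using mu s s0b by (simp add: mult_left_le_one_le)
        also have "\<dots> < s0" using s \<open>s0 > 0\<close> by simp
        finally show ?thesis .
      qed
      moreover have "0 \<le> \<mu> * ((1 - s) * s0)" using mu s s0b by simp
      ultimately have "x \<notin> PP" using below by simp
    }
    then show ?thesis unfolding eq by blast
  qed
  have "v \<bullet> N k \<noteq> 0"
  proof
    assume h0: "v \<bullet> N k = 0"
    have "v \<bullet> rot (t k) = 0" using h0 by (simp add: N_def)
    then obtain cc where cc: "v = cc *\<^sub>R t k" using parallel_of_perp t_ne by metis
    define s where "s = min 1 (min lam (1 - lam) / (\<bar>cc\<bar> + 1))"
    have spos: "0 < s" "s \<le> 1" unfolding s_def using la2 by auto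
    have "s * \<bar>cc\<bar> < min lam (1 - lam)"
    proof -
      have "s \<le> min lam (1 - lam) / (\<bar>cc\<bar> + 1)" unfolding s_def by simp
      then have "s * (\<bar>cc\<bar> + 1) \<le> min lam (1 - lam)" by (simp add: field_simps)
      then show ?thesis using spos by (simp add: algebra_simps)
    qed
    then have r: "0 \<le> lam + s * cc" "lam + s * cc \<le> 1"
      using abs_le_D1[of cc] abs_ge_minus_self[of cc] spos
      by (smt (verit, ccfv_SIG) mult_left_mono mult_minus_right)+
    have "V k + lam *\<^sub>R t k + s *\<^sub>R v = V k + (lam + s * cc) *\<^sub>R t k" using cc by (simp add: algebra_simps)
    then have "V k + lam *\<^sub>R t k + s *\<^sub>R v \<in> E k" unfolding in_E using r by blast
    then have "V k + lam *\<^sub>R t k + s *\<^sub>R v \<in> PP" using E_sub_PP by blast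
    moreover have "V k + lam *\<^sub>R t k + s *\<^sub>R v \<in> closed_segment a (V k + lam *\<^sub>R t k + s *\<^sub>R v)" by simp
    ultimately show False using seg[OF spos] by blast
  qed
  then show ?thesis using la2 seg by blast
qed

lemma approach:
  assumes a: "a \<notin> PP" and ch1: "chain_ok 1 \<epsilon>" and ch2: "chain_ok (-1) \<epsilon>"
  shows "\<exists>\<sigma> k x. (\<sigma> = 1 \<or> \<sigma> = -1) \<and> closed_segment a x \<inter> PP = {} \<and>
      closed_segment x (w \<sigma> \<epsilon> k) \<inter> PP = {} \<and> closed_segment x (w \<sigma> \<epsilon> (Suc k)) \<inter> PP = {}"
proof -
  obtain q where q: "q \<in> PP" "\<forall>i. V i \<notin> closed_segment a q" using exists_q[OF a] by blast
  obtain k lam v where kv: "0 < lam" "lam < 1" "v \<bullet> N k \<noteq> 0"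
    "\<And>s. 0 < s \<Longrightarrow> s \<le> 1 \<Longrightarrow> closed_segment a (V k + lam *\<^sub>R t k + s *\<^sub>R v) \<inter> PP = {}"
    using first_hit[OF a q] by blast
  define \<sigma> :: real where "\<sigma> = (if v \<bullet> N k > 0 then 1 else -1)"
  have sg: "\<sigma> = 1 \<or> \<sigma> = -1" unfolding \<sigma>_def by auto
  have vpos: "v \<bullet> nv \<sigma> k > 0" unfolding \<sigma>_def nv_def using kv(3) by auto
  have ch: "chain_ok \<sigma> \<epsilon>" using sg ch1 ch2 by auto
  have e1: "eventually (\<lambda>s. t (Suc k) \<bullet> nv \<sigma> k > 0 \<longrightarrow>
      (lam - 1) * (t k \<bullet> nv \<sigma> (Suc k)) + (s *\<^sub>R v) \<bullet> nv \<sigma> (Suc k) > 0) (at_right 0)"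
  proof (cases "t (Suc k) \<bullet> nv \<sigma> k > 0")
    case True
    then have "(1 - lam) * (t (Suc k) \<bullet> nv \<sigma> k) > 0" using kv by simp
    then have "eventually (\<lambda>s. (1 - lam) * (t (Suc k) \<bullet> nv \<sigma> k) + s * (v \<bullet> nv \<sigma> (Suc k)) > 0) (at_right 0)"
      by (rule ev_lin)
    then show ?thesis
    proof eventually_elim
      case (elim s)
      have sk: "t k \<bullet> nv \<sigma> (Suc k) = - (t (Suc k) \<bullet> nv \<sigma> k)" by (rule nv_skew)
      have e1: "(s *\<^sub>R v) \<bullet> nv \<sigma> (Suc k) = s * (v \<bullet> nv \<sigma> (Suc k))" by simp
      have e2: "(lam - 1) * (t k \<bullet> nv \<sigma> (Suc k)) = (1 - lam) * (t (Suc k) \<bullet> nv \<sigma> k)" using sk by (simp add: algebra_simps)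
      show ?case using elim e1 e2 by (intro impI) linarith
    qed
  qed simp
  have e2: "eventually (\<lambda>s. t (k+n-1) \<bullet> nv \<sigma> k < 0 \<longrightarrow>
      lam * (t k \<bullet> nv \<sigma> (k+n-1)) + (s *\<^sub>R v) \<bullet> nv \<sigma> (k+n-1) > 0) (at_right 0)"
  proof (cases "t (k+n-1) \<bullet> nv \<sigma> k < 0")
    case True
    have sk: "t k \<bullet> nv \<sigma> (k+n-1) = - (t (k+n-1) \<bullet> nv \<sigma> k)" by (rule nv_skew)
    have "lam * (t k \<bullet> nv \<sigma> (k+n-1)) > 0" unfolding sk using True kv(1) by (simp add: mult_pos_neg)
    then have "eventually (\<lambda>s. lam * (t k \<bullet> nv \<sigma> (k+n-1)) + s * (v \<bullet> nv \<sigma> (k+n-1)) > 0) (at_right 0)"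
      by (rule ev_lin)
    then show ?thesis by eventually_elim simp
  qed simp
  have e3: "eventually (\<lambda>s. norm (s *\<^sub>R v) < delta) (at_right 0)" by (rule ev_small[OF delta(1)])
  have e4: "eventually (\<lambda>s::real. 1 + s * (-1) > 0) (at_right 0)" by (rule ev_lin) simp
  have "eventually (\<lambda>s. good \<sigma> k lam (s *\<^sub>R v) \<and> 0 < s \<and> s \<le> 1) (at_right 0)"
    using e1 e2 e3 e4 ev_pos
  proof eventually_elim
    case (elim s)
    then show ?case unfolding good_def using kv(1,2) vpos by auto
  qed
  then obtain s where s: "good \<sigma> k lam (s *\<^sub>R v)" "0 < s" "s \<le> 1"
    using eventually_happens'[OF trivial_limit_at_right_real] by blast
  define x where "x = V k + lam *\<^sub>R t k + s *\<^sub>R v"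
  have g0: "good \<sigma> k 0 (\<epsilon> *\<^sub>R d \<sigma> k)" "good \<sigma> k 1 (\<epsilon> *\<^sub>R d \<sigma> (Suc k))"
    using ch unfolding chain_ok_def by auto
  have w0: "w \<sigma> \<epsilon> k = V k + 0 *\<^sub>R t k + \<epsilon> *\<^sub>R d \<sigma> k" "w \<sigma> \<epsilon> (Suc k) = V k + 1 *\<^sub>R t k + \<epsilon> *\<^sub>R d \<sigma> (Suc k)"
    unfolding w_def t_def by simp_all
  have "closed_segment x (w \<sigma> \<epsilon> k) \<inter> PP = {}"
    unfolding x_def w0 by (rule good_segment[OF s(1) g0(1)])
  moreover have "closed_segment x (w \<sigma> \<epsilon> (Suc k)) \<inter> PP = {}"
    unfolding x_def w0 by (rule good_segment[OF s(1) g0(2)])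
  moreover have "closed_segment a x \<inter> PP = {}" unfolding x_def using kv(4) s by blast
  ultimately show ?thesis using sg by blast
qed

end



lemma pp_seg: "closed_segment a b \<subseteq> S \<Longrightarrow> polygonal_path_in S a b 1"
  unfolding polygonal_path_in_def by (intro exI[of _ "\<lambda>i. if i = 0 then a else b"]) auto

lemma pp_chain: "(\<And>i. i < m \<Longrightarrow> closed_segment (f i) (f (Suc i)) \<subseteq> S) \<Longrightarrow> polygonal_path_in S (f 0) (f m) m"
  unfolding polygonal_path_in_def by (intro exI[of _ f]) auto

lemma pp_trans:
  assumes "polygonal_path_in S a b k" "polygonal_path_in S b c l"
  shows "polygonal_path_in S a c (k + l)"
proof -
  obtain q where q: "q 0 = a" "q k = b" "\<And>i. i < k \<Longrightarrow> closed_segment (q i) (q (Suc i)) \<subseteq> S"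
    using assms(1) unfolding polygonal_path_in_def by blast
  obtain r where r: "r 0 = b" "r l = c" "\<And>i. i < l \<Longrightarrow> closed_segment (r i) (r (Suc i)) \<subseteq> S"
    using assms(2) unfolding polygonal_path_in_def by blast
  define z where "z i = (if i \<le> k then q i else r (i - k))" for i
  have "z 0 = a" "z (k + l) = c" using q r unfolding z_def by auto
  moreover have "closed_segment (z i) (z (Suc i)) \<subseteq> S" if i: "i < k + l" for i
  proof (cases "i < k")
    case True
    then show ?thesis using q(3)[OF True] unfolding z_def by auto
  next
    case False
    then have "i - k < l" "Suc i - k = Suc (i - k)" using i by auto
    moreover have "z i = r (i - k)" using False q(2) r(1) unfolding z_def by (cases "i = k") auto
    ultimately show ?thesis using r(3) False unfolding z_def by auto
  qed
  ultimately show ?thesis unfolding polygonal_path_in_def by blast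
qed

lemma pp_mono:
  assumes "polygonal_path_in S a b k" "b \<in> S" "k \<le> K"
  shows "polygonal_path_in S a b K"
proof -
  have "polygonal_path_in S b b (K - k)"
    unfolding polygonal_path_in_def using assms(2) by (intro exI[of _ "\<lambda>i. b"]) auto
  then show ?thesis using pp_trans[OF assms(1)] assms(3) by fastforce
qed

lemma polydist_le: "polygonal_path_in S a b k \<Longrightarrow> polydist S a b \<le> enat k"
  unfolding polydist_def by (rule INF_lower) simp

lemma poldiam_le: "(\<And>a b. a \<in> S \<Longrightarrow> b \<in> S \<Longrightarrow> polydist S a b \<le> B) \<Longrightarrow> poldiam S \<le> B"
  unfolding poldiam_def by (intro SUP_least) auto

context spoly begin

lemma w_mod: "i mod n = j mod n \<Longrightarrow> w \<sigma> \<epsilon> i = w \<sigma> \<epsilon> j"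
  unfolding w_def using V_mod d_mod by metis

lemma D_prop:
  fixes ka kb :: nat
  defines "D \<equiv> (kb mod n + n - ka mod n) mod n"
  shows "(ka + D) mod n = kb mod n" "D < n"
proof -
  have "(ka + D) mod n = (ka mod n + (kb mod n + n - ka mod n)) mod n"
    unfolding D_def by (simp add: mod_add_left_eq mod_add_right_eq)
  also have "ka mod n + (kb mod n + n - ka mod n) = kb mod n + n"
    using mod_less_divisor[OF npos, of ka] by arith
  finally show "(ka + D) mod n = kb mod n" by simp
  show "D < n" unfolding D_def using npos by simp
qed

lemma chain_path:
  assumes segs: "\<And>k. closed_segment (W k) (W (Suc k)) \<subseteq> S"
    and per: "\<And>i j. i mod n = j mod n \<Longrightarrow> W i = W j"
  shows "\<exists>i j m. (i = ka \<or> i = Suc ka) \<and> (j = kb \<or> j = Suc kb) \<and> m + 1 \<le> n div 2 \<and>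
           polygonal_path_in S (W i) (W j) m"
proof -
  define D where "D = (kb mod n + n - ka mod n) mod n"
  have D: "(ka + D) mod n = kb mod n" "D < n" using D_prop unfolding D_def by auto
  have n2: "n div 2 \<ge> 1" using n3 by simp
  consider (z) "D = 0" | (f) "1 \<le> D" "D \<le> n div 2" | (b) "D > n div 2" by linarith
  then show ?thesis
  proof cases
    case z
    then have "ka mod n = kb mod n" using D(1) by simp
    then have "Suc ka mod n = Suc kb mod n" by (metis mod_Suc_eq)
    then have "W (Suc ka) = W (Suc kb)" by (rule per)
    moreover have "polygonal_path_in S (W (Suc ka)) (W (Suc ka)) 0"
      unfolding polygonal_path_in_def by (intro exI[of _ "\<lambda>i. W (Suc ka)"]) auto
    ultimately show ?thesis using n2 by fastforce
  next
    case f
    define g where "g i = W (Suc ka + i)" for i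
    have "polygonal_path_in S (g 0) (g (D - 1)) (D - 1)"
      by (rule pp_chain) (simp add: g_def segs)
    moreover have "g (D - 1) = W kb" unfolding g_def using f D(1) by (intro per) simp
    moreover have "g 0 = W (Suc ka)" unfolding g_def by simp
    ultimately show ?thesis using f by (intro exI[of _ "Suc ka"] exI[of _ kb] exI[of _ "D - 1"]) auto
  next
    case b
    define m where "m = n - D - 1"
    define g where "g i = W (ka + n - i)" for i
    have "polygonal_path_in S (g 0) (g m) m"
    proof (rule pp_chain)
      fix i assume "i < m"
      then have "ka + n - i = Suc (ka + n - Suc i)" unfolding m_def by simp
      then show "closed_segment (g i) (g (Suc i)) \<subseteq> S" unfolding g_def
        using segs[of "ka + n - Suc i"] by (simp add: closed_segment_commute)
    qed
    moreover have "g 0 = W ka" unfolding g_def by (rule per) simp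
    moreover have "g m = W (Suc kb)"
    proof -
      have "ka + n - m = Suc (ka + D)" unfolding m_def using D(2) b by simp
      moreover have "Suc (ka + D) mod n = Suc kb mod n" using D(1) by (metis mod_Suc_eq)
      ultimately have "(ka + n - m) mod n = Suc kb mod n" by simp
      then show ?thesis unfolding g_def by (rule per)
    qed
    moreover have "m + 1 \<le> n div 2" unfolding m_def using b D(2) by linarith
    ultimately show ?thesis by (intro exI[of _ ka] exI[of _ "Suc kb"] exI[of _ m]) auto
  qed
qed

end



lemma pp_subset: "polygonal_path_in S a b k \<Longrightarrow> S \<subseteq> T \<Longrightarrow> polygonal_path_in T a b k"
  unfolding polygonal_path_in_def by blast

context spoly begin

lemma seg_comp:
  assumes "closed_segment y1 y2 \<inter> PP = {}" "y1 \<in> connected_component_set (- PP) z \<or> y2 \<in> connected_component_set (- PP) z"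
  shows "closed_segment y1 y2 \<subseteq> connected_component_set (- PP) z"
proof -
  have sub: "closed_segment y1 y2 \<subseteq> - PP" using assms(1) by blast
  from assms(2) show ?thesis
  proof
    assume p: "y1 \<in> connected_component_set (- PP) z"
    have "closed_segment y1 y2 \<subseteq> connected_component_set (- PP) y1"
      by (rule connected_component_maximal) (use sub in auto)
    then show ?thesis using connected_component_eq[OF p] by simp
  next
    assume q: "y2 \<in> connected_component_set (- PP) z"
    have "closed_segment y1 y2 \<subseteq> connected_component_set (- PP) y2"
      by (rule connected_component_maximal) (use sub in auto)
    then show ?thesis using connected_component_eq[OF q] by simp
  qed
qed

lemma main_U:
  assumes U: "U = inside PP \<or> U = outside PP"
  shows "poldiam U \<le> enat (n div 2 + 3)"
proof -
  obtain \<epsilon> where ch1: "chain_ok 1 \<epsilon>" and ch2: "chain_ok (-1) \<epsilon>" using exists_eps by blast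
  define C where "C \<sigma> = connected_component_set (- PP) (w \<sigma> \<epsilon> 0)" for \<sigma>
  have segC: "closed_segment (w \<sigma> \<epsilon> k) (w \<sigma> \<epsilon> (Suc k)) \<subseteq> C \<sigma>" if s: "\<sigma> = 1 \<or> \<sigma> = -1" for \<sigma> k
  proof (induction k)
    case 0
    have "chain_ok \<sigma> \<epsilon>" using s ch1 ch2 by auto
    then have "closed_segment (w \<sigma> \<epsilon> 0) (w \<sigma> \<epsilon> (Suc 0)) \<inter> PP = {}" by (rule chain_seg)
    moreover have "w \<sigma> \<epsilon> 0 \<in> C \<sigma>" unfolding C_def
      using calculation by (simp add: disjoint_iff)
    ultimately show ?case unfolding C_def using seg_comp by blast
  next
    case (Suc k)
    have "chain_ok \<sigma> \<epsilon>" using s ch1 ch2 by auto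
    then have "closed_segment (w \<sigma> \<epsilon> (Suc k)) (w \<sigma> \<epsilon> (Suc (Suc k))) \<inter> PP = {}" by (rule chain_seg)
    moreover have "w \<sigma> \<epsilon> (Suc k) \<in> C \<sigma>" using Suc by auto
    ultimately show ?case unfolding C_def using seg_comp by blast
  qed
  have wC: "w \<sigma> \<epsilon> k \<in> C \<sigma>" if s: "\<sigma> = 1 \<or> \<sigma> = -1" for \<sigma> k
    using segC[OF s, of k] by auto
  have appr: "\<exists>\<sigma> k x. (\<sigma> = 1 \<or> \<sigma> = -1) \<and> closed_segment a x \<subseteq> C \<sigma> \<and>
      closed_segment x (w \<sigma> \<epsilon> k) \<subseteq> C \<sigma> \<and> closed_segment x (w \<sigma> \<epsilon> (Suc k)) \<subseteq> C \<sigma>" if a: "a \<notin> PP" for a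
  proof -
    obtain \<sigma> k x where h: "\<sigma> = 1 \<or> \<sigma> = -1" "closed_segment a x \<inter> PP = {}"
      "closed_segment x (w \<sigma> \<epsilon> k) \<inter> PP = {}" "closed_segment x (w \<sigma> \<epsilon> (Suc k)) \<inter> PP = {}"
      using approach[OF a ch1 ch2] by blast
    have s1: "closed_segment x (w \<sigma> \<epsilon> k) \<subseteq> C \<sigma>" unfolding C_def
      using seg_comp[OF h(3)] wC[OF h(1), of k] unfolding C_def by blast
    then have "x \<in> C \<sigma>" by auto
    then have s2: "closed_segment a x \<subseteq> C \<sigma>" "closed_segment x (w \<sigma> \<epsilon> (Suc k)) \<subseteq> C \<sigma>"
      unfolding C_def using seg_comp[OF h(2)] seg_comp[OF h(4)] unfolding C_def by blast+
    show ?thesis using h(1) s1 s2 by blast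
  qed
  have inC: "\<exists>\<sigma>. (\<sigma> = 1 \<or> \<sigma> = -1) \<and> a \<in> C \<sigma>" if "a \<notin> PP" for a
    using appr[OF that] by blast
  have C_sub: "C \<sigma> \<subseteq> - PP" for \<sigma> unfolding C_def by (rule connected_component_subset)
  have Cne: "C 1 \<noteq> C (-1)"
  proof
    assume eq: "C 1 = C (-1)"
    have "- PP = C 1"
    proof
      show "- PP \<subseteq> C 1" using inC eq by blast
    qed (rule C_sub)
    moreover have "connected (C 1)" unfolding C_def by simp
    ultimately have "connected (- PP)" by simp
    then show False using polygon_disconnected[OF n3 spc] by simp
  qed
  have bPP: "bounded PP" using compact_PP compact_imp_bounded by blast
  have comp: "connected_component (- PP) a b" if ab: "a \<in> U" "b \<in> U" for a b
    using U
  proof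
    assume Uo: "U = outside PP"
    have "connected (outside PP)" by (rule connected_outside[OF bPP]) simp
    moreover have "outside PP \<subseteq> - PP" by (metis inside_Un_outside sup.cobounded2)
    ultimately show ?thesis unfolding connected_component_def using ab Uo by blast
  next
    assume Ui: "U = inside PP"
    have anp: "a \<notin> PP" "b \<notin> PP" using ab Ui inside_no_overlap[of PP] by blast+
    obtain \<sigma>a where sa: "\<sigma>a = 1 \<or> \<sigma>a = -1" "a \<in> C \<sigma>a" using inC[OF anp(1)] by blast
    obtain \<sigma>b where sb: "\<sigma>b = 1 \<or> \<sigma>b = -1" "b \<in> C \<sigma>b" using inC[OF anp(2)] by blast
    show ?thesis
    proof (cases "\<sigma>a = \<sigma>b")
      case True
      then have "a \<in> C \<sigma>a" "b \<in> C \<sigma>a" using sa sb by auto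
      have "connected_component_set (- PP) a = C \<sigma>a"
        using connected_component_eq[of a "- PP" "w \<sigma>a \<epsilon> 0"] \<open>a \<in> C \<sigma>a\<close> unfolding C_def by simp
      then have "b \<in> connected_component_set (- PP) a" using \<open>b \<in> C \<sigma>a\<close> by simp
      then show ?thesis by simp
    next
      case False
      have ba: "bounded (C \<sigma>a)" using ab(1) Ui sa(2) connected_component_eq[of a "- PP" "w \<sigma>a \<epsilon> 0"]
        unfolding inside_def C_def by auto
      have bb: "bounded (C \<sigma>b)" using ab(2) Ui sb(2) connected_component_eq[of b "- PP" "w \<sigma>b \<epsilon> 0"]
        unfolding inside_def C_def by auto
      have "C \<sigma>a \<union> C \<sigma>b = C 1 \<union> C (-1)" using sa(1) sb(1) False by auto
      moreover have "bounded (C \<sigma>a \<union> C \<sigma>b)" using ba bb by simp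
      ultimately have "bounded (C 1 \<union> C (-1))" by simp
      moreover have "UNIV \<subseteq> PP \<union> (C 1 \<union> C (-1))" using inC by blast
      moreover have "bounded (PP \<union> (C 1 \<union> C (-1)))" using calculation(1) bPP by simp
      ultimately have "bounded (UNIV :: (real^2) set)" using bounded_subset by blast
      then show ?thesis using not_bounded_UNIV by blast
    qed
  qed
  have Usub: "connected_component_set (- PP) a \<subseteq> U" if "a \<in> U" for a
    using U that inside_same_component outside_same_component by blast
  show ?thesis
  proof (rule poldiam_le)
    fix a b assume ab: "a \<in> U" "b \<in> U"
    have anp: "a \<notin> PP" "b \<notin> PP" using ab U inside_no_overlap outside_no_overlap by blast+
    obtain \<sigma> ka xa where ha: "\<sigma> = 1 \<or> \<sigma> = -1" "closed_segment a xa \<subseteq> C \<sigma>"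
      "closed_segment xa (w \<sigma> \<epsilon> ka) \<subseteq> C \<sigma>" "closed_segment xa (w \<sigma> \<epsilon> (Suc ka)) \<subseteq> C \<sigma>"
      using appr[OF anp(1)] by blast
    obtain \<sigma>' kb xb where hb: "\<sigma>' = 1 \<or> \<sigma>' = -1" "closed_segment b xb \<subseteq> C \<sigma>'"
      "closed_segment xb (w \<sigma>' \<epsilon> kb) \<subseteq> C \<sigma>'" "closed_segment xb (w \<sigma>' \<epsilon> (Suc kb)) \<subseteq> C \<sigma>'"
      using appr[OF anp(2)] by blast
    have aC: "a \<in> C \<sigma>" and bC: "b \<in> C \<sigma>'" using ha(2) hb(2) by auto
    have "C \<sigma> = connected_component_set (- PP) a"
      using connected_component_eq[of a "- PP" "w \<sigma> \<epsilon> 0"] aC unfolding C_def by simp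
    moreover have "C \<sigma>' = connected_component_set (- PP) b"
      using connected_component_eq[of b "- PP" "w \<sigma>' \<epsilon> 0"] bC unfolding C_def by simp
    moreover have "connected_component_set (- PP) a = connected_component_set (- PP) b"
      using comp[OF ab] connected_component_eq[of b "- PP" a] by simp
    ultimately have CC: "C \<sigma> = C \<sigma>'" by simp
    then have ss: "\<sigma>' = \<sigma>" using Cne ha(1) hb(1) by auto
    define S where "S = C \<sigma>"
    have SU: "S \<subseteq> U" unfolding S_def using Usub[OF ab(1)] \<open>C \<sigma> = connected_component_set (- PP) a\<close> by simp
    have segs: "\<And>k. closed_segment (w \<sigma> \<epsilon> k) (w \<sigma> \<epsilon> (Suc k)) \<subseteq> S" unfolding S_def using segC[OF ha(1)] by blast
    obtain i j m where ijm: "i = ka \<or> i = Suc ka" "j = kb \<or> j = Suc kb" "m + 1 \<le> n div 2"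
      "polygonal_path_in S (w \<sigma> \<epsilon> i) (w \<sigma> \<epsilon> j) m"
      using chain_path[of "w \<sigma> \<epsilon>" S ka kb, OF segs w_mod] by blast
    have p1: "polygonal_path_in S a xa 1" using ha(2) unfolding S_def by (rule pp_seg)
    have p2: "polygonal_path_in S xa (w \<sigma> \<epsilon> i) 1"
    proof (rule pp_seg)
      show "closed_segment xa (w \<sigma> \<epsilon> i) \<subseteq> S" using ijm(1) ha(3,4) unfolding S_def by (cases "i = ka") auto
    qed
    have hb': "closed_segment xb (w \<sigma> \<epsilon> kb) \<subseteq> S" "closed_segment xb (w \<sigma> \<epsilon> (Suc kb)) \<subseteq> S"
      "closed_segment b xb \<subseteq> S" using hb(2,3,4) unfolding ss S_def by auto
    have p4: "polygonal_path_in S (w \<sigma> \<epsilon> j) xb 1"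
    proof (rule pp_seg)
      have "closed_segment xb (w \<sigma> \<epsilon> j) \<subseteq> S" using ijm(2) hb' by (cases "j = kb") auto
      then show "closed_segment (w \<sigma> \<epsilon> j) xb \<subseteq> S" by (simp add: closed_segment_commute)
    qed
    have p5: "polygonal_path_in S xb b 1"
    proof (rule pp_seg)
      show "closed_segment xb b \<subseteq> S" using hb'(3) by (simp add: closed_segment_commute)
    qed
    have "polygonal_path_in S a b (1 + 1 + m + 1 + 1)"
      using pp_trans[OF pp_trans[OF pp_trans[OF pp_trans[OF p1 p2] ijm(4)] p4] p5] .
    then have "polygonal_path_in U a b (1 + 1 + m + 1 + 1)" using SU by (rule pp_subset)
    moreover have "1 + 1 + m + 1 + 1 \<le> n div 2 + 3" using ijm(3) by simp
    ultimately have "polygonal_path_in U a b (n div 2 + 3)" using ab(2) pp_mono by blast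
    then show "polydist U a b \<le> enat (n div 2 + 3)" by (rule polydist_le)
  qed
qed

end

theorem theorem3p1:
  fixes n :: nat and p :: "nat \<Rightarrow> real^2"
  assumes "n \<ge> 3" and "simple_closed_polygon n p"
  shows "poldiam (inside (polygon n p)) \<le> enat (n div 2 + 3)
       \<and> poldiam (outside (polygon n p)) \<le> enat (n div 2 + 3)"
proof -
  interpret spoly n p using assms by unfold_locales
  show ?thesis using main_U by blast
qed



end
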